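(* There is an absolute constant $C$ such that the following holds. Let $A=(\Sigma, Q, Q_0, \delta, F)$ be an NFA with $n$ states that remembers the last symbol. For each symbol $a \in \Sigma$, let $Q_a=\bigcup_{q\in Q}\delta(q,a) \subseteq Q$ be the set of states reachable by a transition by $a$, and let $n_1 = \max_{a \in \Sigma} |Q_a|$. Then there is a DFA with at most $2^{n-n_1} \cdot (g(n_1)+Cn_1^2)$ states recognizing $L(A)$.
   Context: Landau's function is $g(m)=\max\{\operatorname{lcm}(p_1,\ldots,p_k) : k\geqslant 1,\ p_i\geqslant 1 \text{ integers},\ p_1+\cdots+p_k\leqslant m\}$. An NFA is a quintuple $(\Sigma,Q,Q_0,\delta,F)$ with set of initial states $Q_0\subseteq Q$, transition function $\delta\colon Q\times\Sigma\to 2^Q$ and accepting states $F$. A DFA is an NFA with one initial state and exactly one transition from each state by each symbol. An NFA remembers the last symbol if its state set is a disjoint union of subsets $P_a$ ($a\in\Sigma$) with $\delta(q,a)\subseteq P_a$ for all $q\in Q$, $a\in\Sigma$. *)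

theory Defs
  imports Complex_Main
begin

(* For m = 0 the set of such lists is empty; we use the
   standard convention g(0) = 1 (the lcm of the empty partition). *)
definition landau :: "nat \<Rightarrow> nat" where
  "landau m = Max (insert 1 {Lcm (set ps) | ps. ps \<noteq> [] \<and> (\<forall>p\<in>set ps. p \<ge> 1) \<and> sum_list ps \<le> m})"

definition is_nfa :: "'a set \<Rightarrow> 'q set \<Rightarrow> 'q set \<Rightarrow> ('q \<Rightarrow> 'a \<Rightarrow> 'q set) \<Rightarrow> 'q set \<Rightarrow> bool" where
  "is_nfa \<Sigma> Q Q0 \<delta> F \<longleftrightarrow> finite \<Sigma> \<and> finite Q \<and> Q0 \<subseteq> Q \<and> F \<subseteq> Q \<and>
     (\<forall>q\<in>Q. \<forall>a\<in>\<Sigma>. \<delta> q a \<subseteq> Q)"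

definition is_dfa :: "'a set \<Rightarrow> 'q set \<Rightarrow> 'q set \<Rightarrow> ('q \<Rightarrow> 'a \<Rightarrow> 'q set) \<Rightarrow> 'q set \<Rightarrow> bool" where
  "is_dfa \<Sigma> Q Q0 \<delta> F \<longleftrightarrow> is_nfa \<Sigma> Q Q0 \<delta> F \<and> card Q0 = 1 \<and>
     (\<forall>q\<in>Q. \<forall>a\<in>\<Sigma>. card (\<delta> q a) = 1)"

definition delta_word :: "('q \<Rightarrow> 'a \<Rightarrow> 'q set) \<Rightarrow> 'q set \<Rightarrow> 'a list \<Rightarrow> 'q set" where
  "delta_word \<delta> S w = foldl (\<lambda>T a. \<Union>q\<in>T. \<delta> q a) S w"

definition nfa_lang :: "'a set \<Rightarrow> 'q set \<Rightarrow> ('q \<Rightarrow> 'a \<Rightarrow> 'q set) \<Rightarrow> 'q set \<Rightarrow> 'a list set" where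
  "nfa_lang \<Sigma> Q0 \<delta> F = {w. set w \<subseteq> \<Sigma> \<and> delta_word \<delta> Q0 w \<inter> F \<noteq> {}}"

definition remembers_last :: "'a set \<Rightarrow> 'q set \<Rightarrow> ('q \<Rightarrow> 'a \<Rightarrow> 'q set) \<Rightarrow> bool" where
  "remembers_last \<Sigma> Q \<delta> \<longleftrightarrow> (\<exists>P :: 'a \<Rightarrow> 'q set.
     Q = (\<Union>a\<in>\<Sigma>. P a) \<and>
     (\<forall>a\<in>\<Sigma>. \<forall>b\<in>\<Sigma>. a \<noteq> b \<longrightarrow> P a \<inter> P b = {}) \<and>
     (\<forall>q\<in>Q. \<forall>a\<in>\<Sigma>. \<delta> q a \<subseteq> P a))"

definition reach_by :: "'q set \<Rightarrow> ('q \<Rightarrow> 'a \<Rightarrow> 'q set) \<Rightarrow> 'a \<Rightarrow> 'q set" where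
  "reach_by Q \<delta> a = (\<Union>q\<in>Q. \<delta> q a)"

end

theory Submission
  imports Defs "HOL-Number_Theory.Cong"
begin

definition asums :: "nat set \<Rightarrow> nat set" where
  "asums D = {sum_list xs | xs. set xs \<subseteq> D}"

lemma sums_shorten:
  fixes D :: "nat set" and a :: nat
  assumes "a > 0"
  shows "set xs \<subseteq> D \<Longrightarrow> \<exists>ys. set ys \<subseteq> D \<and> length ys < a \<and> sum_list ys \<le> sum_list xs \<and> sum_list ys mod a = sum_list xs mod a"
proof (induction "length xs" arbitrary: xs rule: less_induct)
  case less
  show ?case
  proof (cases "length xs < a")
    case True then show ?thesis using less.prems by blast
  next
    case False
    let ?g = "\<lambda>i. sum_list (take i xs) mod a"
    have "\<not> inj_on ?g {0..a}"
    proof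
      assume "inj_on ?g {0..a}"
      then have "card (?g ` {0..a}) = a + 1" by (simp add: card_image)
      moreover have "?g ` {0..a} \<subseteq> {0..<a}" using assms by auto
      hence "card (?g ` {0..a}) \<le> a" using card_mono[of "{0..<a}"] by fastforce
      ultimately show False by simp
    qed
    then obtain i j where ij: "i \<le> a" "j \<le> a" "i \<noteq> j" "?g i = ?g j"
      unfolding inj_on_def by auto
    then obtain i j where ij: "i < j" "j \<le> a" "?g i = ?g j"
      by (metis linorder_neqE_nat)
    define zs where "zs = take i xs @ drop j xs"
    have lj: "j \<le> length xs" using ij False by simp
    have len: "length zs < length xs" using ij lj unfolding zs_def by simp
    have setz: "set zs \<subseteq> D" using less.prems set_take_subset[of i xs] set_drop_subset[of j xs] unfolding zs_def by auto
    have sx: "sum_list xs = sum_list (take j xs) + sum_list (drop j xs)"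
      by (metis append_take_drop_id sum_list_append)
    have tj: "sum_list (take j xs) = sum_list (take i xs) + sum_list (take (j - i) (drop i xs))"
      using take_add[of i "j-i" xs] ij by simp
    have sz: "sum_list zs = sum_list (take i xs) + sum_list (drop j xs)" unfolding zs_def by simp
    have le: "sum_list zs \<le> sum_list xs" using sx tj sz by simp
    have md: "sum_list zs mod a = sum_list xs mod a"
      unfolding sx sz using mod_add_cong[OF ij(3)[symmetric] refl] tj by simp
    from less.hyps[OF len setz] obtain ys where
      "set ys \<subseteq> D" "length ys < a" "sum_list ys \<le> sum_list zs" "sum_list ys mod a = sum_list zs mod a"
      by blast
    then show ?thesis using le md by (intro exI[of _ ys]) auto
  qed
qed

lemma sums_bezout:
  fixes D :: "nat set" and a n :: nat
  assumes "finite D" "a \<in> D" "a > 0" "Gcd D dvd n"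
  shows "\<exists>xs. set xs \<subseteq> D \<and> sum_list xs mod a = n mod a"
proof -
  define H where "H = {y::int. \<exists>xs::nat list. set xs \<subseteq> D \<and> [y = int (sum_list xs)] (mod int a)}"
  have H0: "0 \<in> H" unfolding H_def by (auto intro!: exI[of _ "[]"])
  have Hadd: "y1 + y2 \<in> H" if hy: "y1 \<in> H" "y2 \<in> H" for y1 y2
  proof -
    obtain xs1 where 1: "set xs1 \<subseteq> D" "[y1 = int (sum_list xs1)] (mod int a)"
      using hy(1) unfolding H_def by blast
    obtain xs2 where 2: "set xs2 \<subseteq> D" "[y2 = int (sum_list xs2)] (mod int a)"
      using hy(2) unfolding H_def by blast
    from 1 2 have "set (xs1 @ xs2) \<subseteq> D" "[y1 + y2 = int (sum_list (xs1 @ xs2))] (mod int a)"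
      by (auto intro: cong_add)
    then show ?thesis unfolding H_def by blast
  qed
  have Hcong: "y' \<in> H" if "y \<in> H" "[y' = y] (mod int a)" for y y'
    using that unfolding H_def by (auto intro: cong_trans)
  have HD: "int x \<in> H" if "x \<in> D" for x
    using that unfolding H_def by (auto intro!: exI[of _ "[x]"])
  have Hnat: "int k * y \<in> H" if "y \<in> H" for k y
    by (induction k) (auto simp: H0 distrib_right intro: Hadd that)
  have Hneg: "- y \<in> H" if "y \<in> H" for y
  proof -
    have "[- y = int (a - 1) * y] (mod int a)"
      using assms(3) by (simp add: cong_iff_dvd_diff algebra_simps of_nat_diff)
    then show ?thesis using Hcong Hnat[OF that] by blast
  qed
  have Hint: "k * y \<in> H" if "y \<in> H" for k y
  proof (cases "k \<ge> 0")
    case True then show ?thesis using Hnat[OF that, of "nat k"] by simp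
  next
    case False then show ?thesis using Hneg[OF Hnat[OF that, of "nat (-k)"]] by simp
  qed
  have "F \<subseteq> D \<Longrightarrow> int (Gcd F) \<in> H" if "finite F" for F
    using that
  proof (induction F rule: finite_induct)
    case empty then show ?case using H0 by simp
  next
    case (insert x F)
    obtain u v where uv: "u * int x + v * int (Gcd F) = gcd (int x) (int (Gcd F))"
      using bezout_int by blast
    have "u * int x + v * int (Gcd F) \<in> H"
      using insert Hadd Hint HD by simp
    then show ?case using uv by (simp add: gcd_int_def)
  qed
  then have "int (Gcd D) \<in> H" using assms(1) by blast
  then obtain k where "n = Gcd D * k" using assms(4) by (auto elim: dvdE)
  then have "int n \<in> H" using Hint[OF \<open>int (Gcd D) \<in> H\<close>, of "int k"] by (simp add: mult.commute)
  then obtain xs where "set xs \<subseteq> D" "[int n = int (sum_list xs)] (mod int a)" by (auto simp: H_def)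
  then have "[n = sum_list xs] (mod a)" by (simp add: cong_int_iff)
  then show ?thesis using \<open>set xs \<subseteq> D\<close> by (intro exI[of _ xs]) (simp add: cong_def)
qed

lemma frobenius:
  fixes D :: "nat set" and B n :: nat
  assumes "finite D" "D \<noteq> {}" "\<forall>d\<in>D. 0 < d \<and> d \<le> B" "Gcd D dvd n" "B * B \<le> n"
  shows "n \<in> asums D"
proof -
  obtain a where a: "a \<in> D" using assms(2) by blast
  have a0: "a > 0" "a \<le> B" using assms(3) a by auto
  obtain xs where xs: "set xs \<subseteq> D" "sum_list xs mod a = n mod a"
    using sums_bezout[OF assms(1) a a0(1) assms(4)] by blast
  obtain ys where ys: "set ys \<subseteq> D" "length ys < a" "sum_list ys mod a = n mod a"
    using sums_shorten[OF a0(1) xs(1)] xs(2) by auto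
  have "sum_list ys \<le> length ys * B"
    using ys(1) assms(3)
  proof (induction ys)
    case (Cons y ys) then show ?case by auto
  qed simp
  also have "\<dots> \<le> B * B" using ys(2) a0 by (simp add: mult.commute)
  finally have le: "sum_list ys \<le> n" using assms(5) by simp
  have "a dvd n - sum_list ys" using mod_eq_dvd_iff_nat[OF le, of a] ys(3)[symmetric] by simp
  then obtain q where "n - sum_list ys = a * q" by (auto elim: dvdE)
  then have q: "n = sum_list ys + a * q" using le by simp
  have "sum_list (ys @ replicate q a) = n" using q by (simp add: sum_list_replicate mult.commute)
  moreover have "set (ys @ replicate q a) \<subseteq> D" using ys(1) a by auto
  ultimately show ?thesis unfolding asums_def by blast
qed


definition wk :: "('v \<Rightarrow> 'v set) \<Rightarrow> 'v \<Rightarrow> 'v \<Rightarrow> nat \<Rightarrow> bool" where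
  "wk E x z l \<longleftrightarrow> (\<exists>f. f 0 = x \<and> f l = z \<and> (\<forall>i<l. f (Suc i) \<in> E (f i)))"

lemma wk_0[simp]: "wk E x z 0 \<longleftrightarrow> x = z"
  unfolding wk_def by auto

lemma wk_trans: assumes "wk E x y a" "wk E y z b" shows "wk E x z (a + b)"
proof -
  obtain f where f: "f 0 = x" "f a = y" "\<forall>i<a. f (Suc i) \<in> E (f i)" using assms(1) unfolding wk_def by blast
  obtain g where g: "g 0 = y" "g b = z" "\<forall>i<b. g (Suc i) \<in> E (g i)" using assms(2) unfolding wk_def by blast
  define h where "h = (\<lambda>i. if i \<le> a then f i else g (i - a))"
  have "h 0 = x" "h (a + b) = z" using f g by (auto simp: h_def)
  moreover have "\<forall>i<a+b. h (Suc i) \<in> E (h i)"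
  proof (intro allI impI)
    fix i assume i: "i < a + b"
    show "h (Suc i) \<in> E (h i)"
    proof (cases "i < a")
      case True then show ?thesis using f by (auto simp: h_def)
    next
      case False
      then have "Suc i - a = Suc (i - a)" by simp
      moreover have "i - a < b" using i False by simp
      ultimately show ?thesis using False g f by (cases "i = a") (auto simp: h_def)
    qed
  qed
  ultimately show ?thesis unfolding wk_def by blast
qed

lemma wk_sub: assumes "\<forall>i<l. f (Suc i) \<in> E (f i)" "i \<le> j" "j \<le> l"
  shows "wk E (f i) (f j) (j - i)"
  unfolding wk_def
  by (rule exI[of _ "\<lambda>k. f (k + i)"]) (use assms in auto)

lemma wk_split: assumes "wk E x z (a + b)" shows "\<exists>y. wk E x y a \<and> wk E y z b"
proof -
  obtain f where f: "f 0 = x" "f (a+b) = z" "\<forall>i<a+b. f (Suc i) \<in> E (f i)" using assms unfolding wk_def by blast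
  have "wk E (f 0) (f a) (a - 0)" "wk E (f a) (f (a+b)) (a + b - a)"
    using wk_sub[OF f(3), of 0 a] wk_sub[OF f(3), of a "a+b"] by auto
  then show ?thesis using f by auto
qed

lemma wk_Suc: "wk E x z (Suc l) \<longleftrightarrow> (\<exists>y. wk E x y l \<and> z \<in> E y)"
proof
  assume "wk E x z (Suc l)"
  then obtain y where "wk E x y l" "wk E y z 1" using wk_split[of E x z l 1] by auto
  moreover from \<open>wk E y z 1\<close> have "z \<in> E y" unfolding wk_def by auto
  ultimately show "\<exists>y. wk E x y l \<and> z \<in> E y" by blast
next
  assume "\<exists>y. wk E x y l \<and> z \<in> E y"
  then obtain y where "wk E x y l" "z \<in> E y" by blast
  moreover have "wk E y z 1" using \<open>z \<in> E y\<close> unfolding wk_def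
    by (intro exI[of _ "\<lambda>i. if i = 0 then y else z"]) auto
  ultimately show "wk E x z (Suc l)" using wk_trans by fastforce
qed

lemma wk_cut: assumes "f 0 = x" "f l = z" "\<forall>i<l. f (Suc i) \<in> E (f i)" "i < j" "j \<le> l" "f i = f j"
  shows "wk E x z (l - (j - i))"
proof -
  have "wk E (f 0) (f i) (i - 0)" "wk E (f j) (f l) (l - j)"
    using wk_sub[OF assms(3), of 0 i] wk_sub[OF assms(3), of j l] assms by auto
  then have "wk E x z (i + (l - j))" using assms wk_trans by fastforce
  moreover have "i + (l - j) = l - (j - i)" using assms by simp
  ultimately show ?thesis by simp
qed

lemma wk_shorten:
  assumes "finite W"
  shows "f 0 = x \<Longrightarrow> f l = z \<Longrightarrow> \<forall>i<l. f (Suc i) \<in> E (f i) \<Longrightarrow> \<forall>i\<le>l. f i \<in> W \<Longrightarrow> \<exists>l'<card W. wk E x z l'"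
proof (induction l arbitrary: f rule: less_induct)
  case (less l)
  show ?case
  proof (cases "l < card W")
    case True then show ?thesis using less.prems unfolding wk_def by blast
  next
    case False
    have "\<not> inj_on f {0..l}"
    proof
      assume "inj_on f {0..l}"
      then have "card (f ` {0..l}) = l + 1" by (simp add: card_image)
      moreover have "f ` {0..l} \<subseteq> W" using less.prems(4) by auto
      hence "card (f ` {0..l}) \<le> card W" using card_mono[OF assms] by blast
      ultimately show False using False by simp
    qed
    then obtain i j where "i \<le> l" "j \<le> l" "i \<noteq> j" "f i = f j" unfolding inj_on_def by auto
    then obtain i j where ij: "i < j" "j \<le> l" "f i = f j" by (metis linorder_neqE_nat)
    define g where "g = (\<lambda>k. if k \<le> i then f k else f (k + (j - i)))"
    have g0: "g 0 = x" using less.prems by (simp add: g_def)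
    have gl: "g (l - (j - i)) = z"
    proof (cases "j = l")
      case True then show ?thesis using less.prems ij by (auto simp: g_def)
    next
      case False
      then have "\<not> l - (j - i) \<le> i" "l - (j - i) + (j - i) = l" using ij by auto
      then show ?thesis using less.prems by (simp add: g_def)
    qed
    have gp: "\<forall>k<l - (j - i). g (Suc k) \<in> E (g k)"
    proof (intro allI impI)
      fix k assume k: "k < l - (j - i)"
      show "g (Suc k) \<in> E (g k)"
      proof (cases "k < i")
        case True then show ?thesis using less.prems(3) ij by (auto simp: g_def)
      next
        case False
        then have "Suc k + (j - i) = Suc (k + (j - i))" "k + (j - i) < l" using k ij by auto
        then show ?thesis using less.prems(3) ij False
          by (cases "k = i") (auto simp: g_def)
      qed
    qed
    have gW: "\<forall>k\<le>l - (j - i). g k \<in> W" using less.prems(4) ij by (auto simp: g_def)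
    have "l - (j - i) < l" using ij by simp
    from less.IH[OF this g0 gl gp gW] show ?thesis .
  qed
qed


locale dg =
  fixes V :: "'v set" and E :: "'v \<Rightarrow> 'v set"
  assumes finV: "finite V" and clo: "\<forall>v\<in>V. E v \<subseteq> V"
begin

definition reach where "reach x y \<longleftrightarrow> (\<exists>l. wk E x y l)"
definition eqv where "eqv x y \<longleftrightarrow> reach x y \<and> reach y x"
definition cls where "cls x = {y\<in>V. eqv x y}"
definition cyc where "cyc x \<longleftrightarrow> (\<exists>l>0. wk E x x l)"
definition Dset where "Dset u = {c. 0 < c \<and> c \<le> 3 * card (cls u) \<and> wk E u u c}"
definition dd where "dd u = Gcd (Dset u)"
definition NN where "NN u = 9 * card (cls u) ^ 2 + card (cls u)"

lemma wk_V: "x \<in> V \<Longrightarrow> wk E x z l \<Longrightarrow> z \<in> V"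
proof (induction l arbitrary: z)
  case 0 then show ?case by simp
next
  case (Suc l) then show ?case using clo by (auto simp: wk_Suc)
qed

lemma reach_refl: "reach x x" unfolding reach_def by (rule exI[of _ 0]) simp
lemma reach_trans: "reach x y \<Longrightarrow> reach y z \<Longrightarrow> reach x z"
proof -
  assume "reach x y" "reach y z"
  then obtain a b where "wk E x y a" "wk E y z b" unfolding reach_def by blast
  then show ?thesis unfolding reach_def by (intro exI[of _ "a+b"]) (rule wk_trans)
qed
lemma reach_I: "wk E x y l \<Longrightarrow> reach x y" unfolding reach_def by (rule exI[of _ l])
lemma eqv_sym: "eqv x y \<Longrightarrow> eqv y x" unfolding eqv_def by auto
lemma eqv_trans: "eqv x y \<Longrightarrow> eqv y z \<Longrightarrow> eqv x z" unfolding eqv_def using reach_trans[of x y z] reach_trans[of z y x] by blast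
lemma eqv_refl: "eqv x x" unfolding eqv_def using reach_refl by simp
lemma reach_V: "x \<in> V \<Longrightarrow> reach x y \<Longrightarrow> y \<in> V" unfolding reach_def by (elim exE) (rule wk_V)

lemma cls_finite: "finite (cls x)" unfolding cls_def using finV by simp
lemma cls_self: "x \<in> V \<Longrightarrow> x \<in> cls x" unfolding cls_def using eqv_refl by simp
lemma cls_card: "x \<in> V \<Longrightarrow> card (cls x) \<ge> 1"
proof -
  assume "x \<in> V"
  then have "cls x \<noteq> {}" using cls_self by auto
  then show ?thesis using cls_finite[of x] card_gt_0_iff[of "cls x"] by linarith
qed
lemma cls_eq: "y \<in> cls x \<Longrightarrow> cls y = cls x"
proof -
  assume "y \<in> cls x"
  hence h: "eqv x y" by (simp add: cls_def)
  show ?thesis unfolding cls_def using eqv_trans[OF h] eqv_trans[OF eqv_sym[OF h]] by blast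
qed
lemma cls_sub: "cls x \<subseteq> V" unfolding cls_def by auto

lemma on_walk_cls:
  assumes "x \<in> V" "eqv x y" "f 0 = x" "f l = y" "\<forall>i<l. f (Suc i) \<in> E (f i)" "i \<le> l"
  shows "f i \<in> cls x"
proof -
  have "wk E (f 0) (f i) (i - 0)" "wk E (f i) (f l) (l - i)"
    using wk_sub[OF assms(5), of 0 i] wk_sub[OF assms(5), of i l] assms(6) by auto
  then have "reach x (f i)" "reach (f i) y" using assms reach_I by auto
  moreover have "reach y x" using assms(2) eqv_def by blast
  ultimately have "eqv x (f i)" unfolding eqv_def using reach_trans by blast
  moreover have "f i \<in> V" using reach_V[OF assms(1) \<open>reach x (f i)\<close>] .
  ultimately show ?thesis unfolding cls_def by simp
qed

lemma short_in_cls: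
  assumes "x \<in> V" "eqv x y" shows "\<exists>a<card (cls x). wk E x y a"
proof -
  obtain l where "wk E x y l" using assms(2) unfolding eqv_def reach_def by blast
  then obtain f where f: "f 0 = x" "f l = y" "\<forall>i<l. f (Suc i) \<in> E (f i)" unfolding wk_def by blast
  have "\<forall>i\<le>l. f i \<in> cls x" using on_walk_cls[OF assms f] by blast
  from wk_shorten[OF cls_finite f this] show ?thesis .
qed

lemma G1:
  assumes "u \<in> V"
  shows "w \<in> cls u \<Longrightarrow> wk E w w c \<Longrightarrow> dd u dvd c"
proof (induction c arbitrary: w rule: less_induct)
  case (less c)
  have wV: "w \<in> V" and euw: "eqv u w" using less.prems(1) unfolding cls_def by auto
  show ?case
  proof (cases "c \<le> card (cls u)")
    case True
    obtain a where a: "a < card (cls u)" "wk E u w a" using short_in_cls[OF assms euw] by blast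
    have "cls w = cls u" using cls_eq[OF less.prems(1)] .
    obtain b where b: "b < card (cls u)" "wk E w u b" using short_in_cls[OF wV eqv_sym[OF euw]] \<open>cls w = cls u\<close> by auto
    have w1: "wk E u u (a + b)" using wk_trans[OF a(2) b(2)] .
    have w2: "wk E u u (a + c + b)" using wk_trans[OF wk_trans[OF a(2) less.prems(2)] b(2)] .
    have d1: "dd u dvd (a + b)"
    proof (cases "a + b = 0")
      case False then have "a + b \<in> Dset u" using w1 a b unfolding Dset_def by auto
      then show ?thesis unfolding dd_def by (rule Gcd_dvd)
    qed simp
    have d2: "dd u dvd (a + c + b)"
    proof (cases "a + c + b = 0")
      case False then have "a + c + b \<in> Dset u" using w2 a b True unfolding Dset_def by auto
      then show ?thesis unfolding dd_def by (rule Gcd_dvd)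
    qed simp
    have "a + c + b = c + (a + b)" by simp
    then show ?thesis using d1 d2 by (metis dvd_add_left_iff)
  next
    case False
    obtain f where f: "f 0 = w" "f c = w" "\<forall>i<c. f (Suc i) \<in> E (f i)" using less.prems(2) unfolding wk_def by blast
    have fin: "\<forall>i\<le>c. f i \<in> cls u"
      using on_walk_cls[OF wV eqv_refl f] cls_eq[OF less.prems(1)] by blast
    have "\<not> inj_on f {0..<c}"
    proof
      assume "inj_on f {0..<c}"
      then have "card (f ` {0..<c}) = c" by (simp add: card_image)
      moreover have "f ` {0..<c} \<subseteq> cls u" using fin by auto
      hence "card (f ` {0..<c}) \<le> card (cls u)" using card_mono[OF cls_finite] by blast
      ultimately show False using False by simp
    qed
    then obtain i j where "i < c" "j < c" "i \<noteq> j" "f i = f j" unfolding inj_on_def by auto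
    then obtain i j where ij: "i < j" "j < c" "f i = f j" by (metis linorder_neqE_nat)
    have c1: "wk E w w (c - (j - i))" using wk_cut[OF f, of i j] ij by simp
    have c2: "wk E (f i) (f i) (j - i)" using wk_sub[OF f(3), of i j] ij by simp
    have fi: "f i \<in> cls u" using fin ij by simp
    have "dd u dvd (c - (j - i))" using less.IH[OF _ less.prems(1) c1] ij by simp
    moreover have "dd u dvd (j - i)" using less.IH[OF _ fi c2] ij by simp
    moreover have "c = (c - (j - i)) + (j - i)" using ij by simp
    ultimately show ?thesis by (metis dvd_add)
  qed
qed

lemma cyc_short:
  assumes "u \<in> V" "cyc u" shows "\<exists>c>0. c \<le> card (cls u) \<and> wk E u u c"
proof -
  obtain l where l: "l > 0" "wk E u u l" using assms(2) unfolding cyc_def by blast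
  have "1 + (l - 1) = l" using l(1) by simp
  then have "wk E u u (1 + (l - 1))" using l(2) by simp
  then obtain y where y: "wk E u y 1" "wk E y u (l - 1)" using wk_split[of E u u 1 "l - 1"] by blast
  have "eqv u y" using y reach_I unfolding eqv_def by blast
  then have yc: "y \<in> cls u" "y \<in> V" using reach_V[OF assms(1)] unfolding cls_def eqv_def by auto
  obtain a where a: "a < card (cls y)" "wk E y u a" using short_in_cls[OF yc(2) eqv_sym[OF \<open>eqv u y\<close>]] by blast
  have "cls y = cls u" using cls_eq[OF yc(1)] .
  then show ?thesis using wk_trans[OF y(1) a(2)] a(1) by (intro exI[of _ "1 + a"]) auto
qed

lemma dd_pos: assumes "u \<in> V" "cyc u" shows "dd u > 0" "dd u \<le> card (cls u)"
proof -
  obtain c where c: "c > 0" "c \<le> card (cls u)" "wk E u u c" using cyc_short[OF assms] by blast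
  have "dd u dvd c" using G1[OF assms(1) cls_self[OF assms(1)] c(3)] .
  then have "dd u \<noteq> 0" using c(1) by (metis dvd_0_left_iff less_irrefl)
  then show "dd u > 0" by simp
  show "dd u \<le> card (cls u)" using dvd_imp_le[OF \<open>dd u dvd c\<close> c(1)] c(2) by simp
qed

lemma dd_cls: assumes "u \<in> V" "w \<in> cls u" shows "dd w = dd u"
proof -
  have wV: "w \<in> V" using assms(2) cls_sub by auto
  have uw: "u \<in> cls w" using assms cls_eq cls_self by blast
  have "dd u dvd dd w" unfolding dd_def[of w]
    by (rule Gcd_greatest) (use G1[OF assms(1) assms(2)] in \<open>auto simp: Dset_def\<close>)
  moreover have "dd w dvd dd u" unfolding dd_def[of u]
    by (rule Gcd_greatest) (use G1[OF wV uw] in \<open>auto simp: Dset_def\<close>)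
  ultimately show ?thesis by (rule dvd_antisym[symmetric])
qed

lemma cyc_cls: assumes "u \<in> V" "cyc u" "w \<in> cls u" shows "cyc w"
proof -
  obtain l where l: "l > 0" "wk E u u l" using assms(2) unfolding cyc_def by blast
  obtain a b where "wk E w u a" "wk E u w b" using assms(3) unfolding cls_def eqv_def reach_def by blast
  then have "wk E w w (a + l + b)" using wk_trans[OF wk_trans[of E w u a u l] ] l by blast
  then show ?thesis unfolding cyc_def using l by (intro exI[of _ "a + l + b"]) auto
qed

lemma G2:
  assumes "u \<in> V" "v \<in> cls u" "w \<in> cls u" "wk E v w l1" "wk E v w l2"
  shows "l1 mod dd u = l2 mod dd u"
proof -
  have "reach w v" using assms(2,3) reach_trans unfolding cls_def eqv_def by blast
  then obtain r where r: "wk E w v r" unfolding reach_def by blast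
  have "dd u dvd l1 + r" using G1[OF assms(1,2) wk_trans[OF assms(4) r]] .
  moreover have "dd u dvd l2 + r" using G1[OF assms(1,2) wk_trans[OF assms(5) r]] .
  ultimately have "[l1 + r = l2 + r] (mod dd u)" unfolding cong_def by simp
  then show ?thesis using cong_add_rcancel_nat unfolding cong_def by blast
qed

lemma wk_sums: "set xs \<subseteq> Dset u \<Longrightarrow> wk E u u (sum_list xs)"
proof (induction xs)
  case (Cons x xs)
  then have "wk E u u x" unfolding Dset_def by auto
  then show ?case using Cons wk_trans by fastforce
qed simp

lemma G3:
  assumes "u \<in> V" "cyc u" "w \<in> cls u" "wk E u w l" "l' \<ge> NN u" "l' mod dd u = l mod dd u"
  shows "wk E u w l'"
proof -
  let ?s = "card (cls u)"
  have euw: "eqv u w" using assms(3) unfolding cls_def by auto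
  obtain a where a: "a < ?s" "wk E u w a" using short_in_cls[OF assms(1) euw] by blast
  have am: "a mod dd u = l mod dd u" using G2[OF assms(1) cls_self[OF assms(1)] assms(3) a(2) assms(4)] .
  have sq: "(3 * ?s) * (3 * ?s) = 9 * ?s ^ 2" by (simp add: power2_eq_square)
  have "l' \<ge> 9 * ?s ^ 2 + ?s" using assms(5) unfolding NN_def .
  then have ge: "l' - a \<ge> (3 * ?s) * (3 * ?s)" using a(1) unfolding sq by linarith
  have al: "a \<le> l'" using a(1) assms(5) unfolding NN_def by linarith
  have dv: "dd u dvd l' - a" using am assms(6) mod_eq_dvd_iff_nat[OF al, of "dd u"] by simp
  have fin: "finite (Dset u)" unfolding Dset_def by simp
  obtain c where c: "c > 0" "c \<le> ?s" "wk E u u c" using cyc_short[OF assms(1,2)] by blast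
  have "c \<le> 3 * ?s" using c(2) by linarith
  then have "c \<in> Dset u" using c(1,3) unfolding Dset_def by simp
  then have ne: "Dset u \<noteq> {}" by blast
  have "l' - a \<in> asums (Dset u)"
  proof (rule frobenius[OF fin ne _ _ ge])
    show "\<forall>d\<in>Dset u. 0 < d \<and> d \<le> 3 * ?s" unfolding Dset_def by blast
    show "Gcd (Dset u) dvd l' - a" using dv unfolding dd_def .
  qed
  then obtain xs where xs: "l' - a = sum_list xs" "set xs \<subseteq> Dset u" unfolding asums_def by auto
  have "wk E u u (l' - a)" unfolding xs(1) by (rule wk_sums[OF xs(2)])
  from wk_trans[OF this a(2)] show ?thesis using al by simp
qed

lemma noncyc: assumes "\<not> cyc u" "wk E u w l" "eqv u w" shows "l = 0"
proof (rule ccontr)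
  assume "l \<noteq> 0"
  obtain r where "wk E w u r" using assms(3) unfolding eqv_def reach_def by blast
  then have "wk E u u (l + r)" using wk_trans[OF assms(2)] by blast
  moreover have "l + r > 0" using \<open>l \<noteq> 0\<close> by simp
  ultimately show False using assms(1) unfolding cyc_def by blast
qed

end

context dg begin

definition segok where
  "segok x z m U W L \<longleftrightarrow> 0 < m \<and> U 0 = x \<and> W (m - 1) = z \<and>
     (\<forall>i<m. U i \<in> V \<and> wk E (U i) (W i) (L i) \<and> eqv (U i) (W i)) \<and>
     (\<forall>i. Suc i < m \<longrightarrow> U (Suc i) \<in> E (W i)) \<and>
     (\<forall>i<m. \<forall>i'<m. i \<noteq> i' \<longrightarrow> \<not> eqv (U i) (U i')) \<and>
     (\<forall>i i'. i \<le> i' \<longrightarrow> i' < m \<longrightarrow> reach (U i) (U i'))"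

lemma wk_1: "z \<in> E y \<Longrightarrow> wk E y z 1"
  using wk_Suc[of E y z 0] by simp

lemma reach_step: "z \<in> E y \<Longrightarrow> reach y z"
  using reach_I[OF wk_1] .

lemma decomp:
  assumes "x \<in> V"
  shows "wk E x z j \<Longrightarrow> \<exists>m U W L. segok x z m U W L \<and> j = (\<Sum>i<m. L i) + (m - 1)"
proof (induction j arbitrary: z)
  case 0
  then have "z = x" by simp
  have "segok x z 1 (\<lambda>_. x) (\<lambda>_. x) (\<lambda>_. 0)"
    unfolding segok_def using assms \<open>z = x\<close> eqv_refl reach_refl by simp
  then show ?case by (intro exI[of _ 1] exI[of _ "\<lambda>_. x"] exI[of _ "\<lambda>_. 0::nat"]) simp
next
  case (Suc j)
  obtain y where y: "wk E x y j" "z \<in> E y" using Suc.prems wk_Suc by metis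
  obtain m U W L where S: "segok x y m U W L" and J: "j = (\<Sum>i<m. L i) + (m - 1)"
    using Suc.IH[OF y(1)] by blast
  let ?k = "m - 1"
  have m0: "0 < m" and U0: "U 0 = x" and Wk: "W ?k = y"
    and seg: "\<And>i. i < m \<Longrightarrow> U i \<in> V \<and> wk E (U i) (W i) (L i) \<and> eqv (U i) (W i)"
    and edge: "\<And>i. Suc i < m \<Longrightarrow> U (Suc i) \<in> E (W i)"
    and dist: "\<And>i i'. i < m \<Longrightarrow> i' < m \<Longrightarrow> i \<noteq> i' \<Longrightarrow> \<not> eqv (U i) (U i')"
    and rch: "\<And>i i'. i \<le> i' \<Longrightarrow> i' < m \<Longrightarrow> reach (U i) (U i')"
    using S unfolding segok_def by auto
  have km: "?k < m" using m0 by simp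
  have yV: "y \<in> V" using wk_V[OF assms y(1)] .
  have zV: "z \<in> V" using clo yV y(2) by blast
  have wky: "wk E (U ?k) y (L ?k)" using seg[OF km] Wk by simp
  show ?case
  proof (cases "eqv (U ?k) z")
    case True
    define W' where "W' = (\<lambda>i. if i = ?k then z else W i)"
    define L' where "L' = (\<lambda>i. L i + (if i = ?k then 1 else 0))"
    have "segok x z m U W' L'"
      unfolding segok_def
    proof (intro conjI allI impI)
      show "0 < m" "U 0 = x" "W' (m - 1) = z" using m0 U0 by (auto simp: W'_def)
    next
      fix i assume i: "i < m"
      show "U i \<in> V" using seg[OF i] by simp
      show "wk E (U i) (W' i) (L' i)"
      proof (cases "i = ?k")
        case True
        have "wk E (U ?k) z (L ?k + 1)" using wk_trans[OF wky wk_1[OF y(2)]] .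
        then show ?thesis using True by (simp add: W'_def L'_def)
      qed (use seg[OF i] in \<open>simp add: W'_def L'_def\<close>)
      show "eqv (U i) (W' i)" using seg[OF i] True by (cases "i = ?k") (auto simp: W'_def)
    next
      fix i assume "Suc i < m"
      then show "U (Suc i) \<in> E (W' i)" using edge by (auto simp: W'_def)
    next
      fix i i' assume "i < m" "i' < m" "i \<noteq> i'"
      then show "\<not> eqv (U i) (U i')" using dist by blast
    next
      fix i i' assume "i \<le> i'" "i' < m"
      then show "reach (U i) (U i')" using rch by blast
    qed
    moreover have "Suc j = (\<Sum>i<m. L' i) + (m - 1)"
    proof -
      have "(\<Sum>i<m. L' i) = (\<Sum>i<m. L i) + (\<Sum>i<m. if i = ?k then 1 else 0)"
        unfolding L'_def by (rule sum.distrib)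
      also have "(\<Sum>i<m. (if i = ?k then 1 else 0)::nat) = 1" using km by (simp add: sum.delta)
      finally show ?thesis using J by simp
    qed
    ultimately show ?thesis by blast
  next
    case False
    define U' where "U' = U(m := z)"
    define W' where "W' = W(m := z)"
    define L' where "L' = L(m := 0)"
    have rkz: "reach (U i) z" if "i < m" for i
    proof -
      have "reach (U i) (U ?k)" using rch[of i ?k] that by simp
      moreover have "reach (U ?k) y" using reach_I[OF wky] .
      ultimately show ?thesis using reach_trans reach_step[OF y(2)] by blast
    qed
    have nz: "\<not> eqv (U i) z" if "i < m" for i
    proof
      assume e: "eqv (U i) z"
      have "reach (U ?k) z" using rkz[OF km] .
      moreover have "reach z (U i)" using e unfolding eqv_def by simp
      ultimately have "reach (U ?k) (U i)" using reach_trans by blast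
      moreover have "reach (U i) (U ?k)" using rch[of i ?k] that by simp
      ultimately have e2: "eqv (U i) (U ?k)" unfolding eqv_def by simp
      show False
      proof (cases "i = ?k")
        case True then show False using False e by simp
      next
        case ne: False then show False using dist[OF that km ne] e2 by simp
      qed
    qed
    have "segok x z (Suc m) U' W' L'"
      unfolding segok_def
    proof (intro conjI allI impI)
      show "0 < Suc m" "U' 0 = x" "W' (Suc m - 1) = z" using m0 U0 by (auto simp: U'_def W'_def)
    next
      fix i assume i: "i < Suc m"
      show "U' i \<in> V" using seg zV i by (cases "i = m") (auto simp: U'_def)
      show "wk E (U' i) (W' i) (L' i)" using seg i by (cases "i = m") (auto simp: U'_def W'_def L'_def)
      show "eqv (U' i) (W' i)" using seg i eqv_refl by (cases "i = m") (auto simp: U'_def W'_def)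
    next
      fix i assume i: "Suc i < Suc m"
      show "U' (Suc i) \<in> E (W' i)"
      proof (cases "Suc i = m")
        case True then have "i = ?k" by simp
        then show ?thesis using True Wk y(2) by (simp add: U'_def W'_def)
      next
        case False then show ?thesis using edge[of i] i by (simp add: U'_def W'_def)
      qed
    next
      fix i i' assume i: "i < Suc m" "i' < Suc m" "i \<noteq> i'"
      show "\<not> eqv (U' i) (U' i')"
      proof (cases "i = m")
        case True
        then have "i' < m" using i by simp
        then show ?thesis using nz[of i'] True i eqv_sym by (auto simp: U'_def)
      next
        case F1: False
        show ?thesis
        proof (cases "i' = m")
          case True
          then show ?thesis using nz[of i] F1 i by (auto simp: U'_def)
        next
          case False then show ?thesis using dist[of i i'] F1 i by (simp add: U'_def)
        qed
      qed
    next
      fix i i' assume i: "i \<le> i'" "i' < Suc m"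
      show "reach (U' i) (U' i')"
      proof (cases "i' = m")
        case True
        show ?thesis
        proof (cases "i = m")
          case True then show ?thesis using \<open>i' = m\<close> reach_refl by simp
        next
          case False then show ?thesis using rkz[of i] i True by (simp add: U'_def)
        qed
      next
        case False then show ?thesis using rch[of i i'] i by (simp add: U'_def)
      qed
    qed
    moreover have "Suc j = (\<Sum>i<Suc m. L' i) + (Suc m - 1)"
    proof -
      have "(\<Sum>i<m. L' i) = (\<Sum>i<m. L i)" by (rule sum.cong) (auto simp: L'_def)
      then have "(\<Sum>i<Suc m. L' i) = (\<Sum>i<m. L i)" by (simp add: L'_def)
      then show ?thesis using J m0 by simp
    qed
    ultimately show ?thesis by blast
  qed
qed

lemma rebuild:
  "0 < m \<Longrightarrow> (\<forall>i<m. wk E (U i) (W i) (L i)) \<Longrightarrow> (\<forall>i. Suc i < m \<longrightarrow> U (Suc i) \<in> E (W i))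
   \<Longrightarrow> wk E (U 0) (W (m - 1)) ((\<Sum>i<m. L i) + (m - 1))"
proof (induction m)
  case 0 then show ?case by simp
next
  case (Suc m)
  show ?case
  proof (cases "m = 0")
    case True then show ?thesis using Suc.prems by simp
  next
    case False
    have ih: "wk E (U 0) (W (m - 1)) ((\<Sum>i<m. L i) + (m - 1))"
      using Suc.IH False Suc.prems by simp
    have "Suc (m - 1) = m" using False by simp
    then have e: "U m \<in> E (W (m - 1))" using Suc.prems(3)[rule_format, of "m - 1"] by simp
    have "wk E (U 0) (U m) ((\<Sum>i<m. L i) + (m - 1) + 1)" using wk_trans[OF ih wk_1[OF e]] .
    from wk_trans[OF this] Suc.prems(2) have "wk E (U 0) (W m) ((\<Sum>i<m. L i) + (m - 1) + 1 + L m)" by simp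
    moreover have "(\<Sum>i<m. L i) + (m - 1) + 1 + L m = (\<Sum>i<Suc m. L i) + (Suc m - 1)" using False by simp
    ultimately show ?thesis by (simp add: add.commute add.left_commute)
  qed
qed

lemma cls_sum:
  assumes "segok x z m U W L"
  shows "(\<Sum>i<m. card (cls (U i))) \<le> card V"
proof -
  have dist: "\<And>i i'. i < m \<Longrightarrow> i' < m \<Longrightarrow> i \<noteq> i' \<Longrightarrow> \<not> eqv (U i) (U i')"
    using assms unfolding segok_def by blast
  have disj: "\<forall>i\<in>{..<m}. \<forall>i'\<in>{..<m}. i \<noteq> i' \<longrightarrow> cls (U i) \<inter> cls (U i') = {}"
  proof (intro ballI impI)
    fix i i' assume i: "i \<in> {..<m}" "i' \<in> {..<m}" "i \<noteq> i'"
    show "cls (U i) \<inter> cls (U i') = {}"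
    proof (rule ccontr)
      assume "cls (U i) \<inter> cls (U i') \<noteq> {}"
      then obtain y where y: "eqv (U i) y" "eqv (U i') y" unfolding cls_def by blast
      have "eqv (U i) (U i')" using eqv_trans[OF y(1) eqv_sym[OF y(2)]] .
      then show False using dist i by auto
    qed
  qed
  have "(\<Sum>i<m. card (cls (U i))) = card (\<Union>i<m. cls (U i))"
    using card_UN_disjoint[OF _ _ disj] cls_finite by simp
  also have "\<dots> \<le> card V" using card_mono[OF finV] cls_sub by (simp add: UN_least)
  finally show ?thesis .
qed

end

lemma distr:
  fixes f :: "nat \<Rightarrow> nat"
  assumes "finite I"
  shows "set xs \<subseteq> f ` I \<Longrightarrow> \<exists>c. (\<Sum>i\<in>I. f i * c i) = sum_list xs"
proof (induction xs)
  case Nil then show ?case by (intro exI[of _ "\<lambda>_. 0"]) simp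
next
  case (Cons x xs)
  then obtain c where c: "(\<Sum>i\<in>I. f i * c i) = sum_list xs" by auto
  obtain i0 where i0: "i0 \<in> I" "x = f i0" using Cons.prems by auto
  define c' where "c' = (\<lambda>i. c i + (if i = i0 then 1 else 0))"
  have "(\<Sum>i\<in>I. f i * c' i) = (\<Sum>i\<in>I. f i * c i + (if i = i0 then f i else 0))"
    by (rule sum.cong) (auto simp: c'_def)
  also have "\<dots> = (\<Sum>i\<in>I. f i * c i) + (\<Sum>i\<in>I. if i = i0 then f i else 0)"
    by (rule sum.distrib)
  also have "(\<Sum>i\<in>I. if i = i0 then f i else 0) = f i0" using i0 assms by (simp add: sum.delta)
  finally show ?case using c i0 by (intro exI[of _ c']) simp
qed

context dg begin

definition pp where "pp = Lcm (dd ` {u\<in>V. cyc u})"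

lemma pp_pos: "pp > 0"
proof -
  have "finite (dd ` {u\<in>V. cyc u})" using finV by simp
  moreover have "0 \<notin> dd ` {u\<in>V. cyc u}" using dd_pos(1) by fastforce
  ultimately show ?thesis unfolding pp_def using Lcm_0_iff_nat by (metis gr0I)
qed

lemma dd_dvd_pp: "u \<in> V \<Longrightarrow> cyc u \<Longrightarrow> dd u dvd pp"
  unfolding pp_def by (rule dvd_Lcm) blast

lemma period:
  assumes xV: "x \<in> V" and wJ: "wk E x z J"
    and tJ: "J \<ge> 10 * card V ^ 2 + 3 * card V" and tJ': "J' \<ge> 10 * card V ^ 2 + 3 * card V"
    and md: "J mod pp = J' mod pp"
  shows "wk E x z J'"
proof -
  let ?s = "card V"
  obtain m U W L where S: "segok x z m U W L" and J: "J = (\<Sum>i<m. L i) + (m - 1)"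
    using decomp[OF xV wJ] by blast
  have m0: "0 < m" and U0: "U 0 = x" and Wk: "W (m - 1) = z"
    and seg: "\<And>i. i < m \<Longrightarrow> U i \<in> V \<and> wk E (U i) (W i) (L i) \<and> eqv (U i) (W i)"
    and edge: "\<forall>i. Suc i < m \<longrightarrow> U (Suc i) \<in> E (W i)"
    using S unfolding segok_def by auto
  have csum: "(\<Sum>i<m. card (cls (U i))) \<le> ?s" using cls_sum[OF S] .
  have cge: "card (cls (U i)) \<ge> 1" if "i < m" for i using cls_card seg[OF that] by blast
  have cle: "card (cls (U i)) \<le> ?s" for i using card_mono[OF finV cls_sub] .
  have mle: "m \<le> ?s"
  proof -
    have "(\<Sum>i<m. 1) \<le> (\<Sum>i<m. card (cls (U i)))" by (rule sum_mono) (use cge in auto)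
    then show ?thesis using csum by simp
  qed
  have NNle: "NN (U i) \<le> 9 * ?s * card (cls (U i)) + card (cls (U i))" for i
  proof -
    have "card (cls (U i)) ^ 2 \<le> ?s * card (cls (U i))"
      unfolding power2_eq_square using cle[of i] by (rule mult_right_mono) simp
    then show ?thesis unfolding NN_def by simp
  qed
  have NNsum: "(\<Sum>i<m. NN (U i)) \<le> 9 * ?s * ?s + ?s"
  proof -
    have "(\<Sum>i<m. NN (U i)) \<le> (\<Sum>i<m. 9 * ?s * card (cls (U i)) + card (cls (U i)))"
      by (rule sum_mono) (rule NNle)
    also have "\<dots> = 9 * ?s * (\<Sum>i<m. card (cls (U i))) + (\<Sum>i<m. card (cls (U i)))"
      by (simp add: sum.distrib sum_distrib_left)
    also have "\<dots> \<le> 9 * ?s * ?s + ?s" using csum by (intro add_mono mult_left_mono) auto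
    finally show ?thesis .
  qed
  define I where "I = {i. i < m \<and> cyc (U i) \<and> NN (U i) \<le> L i}"
  have Isub: "I \<subseteq> {..<m}" unfolding I_def by auto
  have finI: "finite I" using Isub finite_subset by blast
  have notI: "L i \<le> NN (U i)" if "i < m" "i \<notin> I" for i
  proof (cases "cyc (U i)")
    case True then show ?thesis using that unfolding I_def by auto
  next
    case False then have "L i = 0" using noncyc seg[OF that(1)] by blast
    then show ?thesis by simp
  qed
  define e where "e i = L i - NN (U i)" for i
  define d where "d i = dd (U i)" for i
  define \<rho> where "\<rho> i = e i mod d i" for i
  define Rest where "Rest = (\<Sum>i\<in>{..<m} - I. L i) + (\<Sum>i\<in>I. NN (U i)) + (m - 1)"
  have sL: "(\<Sum>i<m. L i) = (\<Sum>i\<in>{..<m} - I. L i) + (\<Sum>i\<in>I. L i)"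
    using sum.subset_diff[OF Isub] by simp
  have sLI: "(\<Sum>i\<in>I. L i) = (\<Sum>i\<in>I. NN (U i)) + (\<Sum>i\<in>I. e i)"
    unfolding e_def sum.distrib[symmetric] by (rule sum.cong) (auto simp: I_def)
  have JR: "J = Rest + (\<Sum>i\<in>I. e i)" unfolding J Rest_def sL sLI by simp
  have Rle: "Rest \<le> 9 * ?s * ?s + 2 * ?s"
  proof -
    have "(\<Sum>i\<in>{..<m} - I. L i) \<le> (\<Sum>i\<in>{..<m} - I. NN (U i))"
      by (rule sum_mono) (use notI in auto)
    moreover have "(\<Sum>i<m. NN (U i)) = (\<Sum>i\<in>{..<m} - I. NN (U i)) + (\<Sum>i\<in>I. NN (U i))"
      using sum.subset_diff[OF Isub] by simp
    ultimately show ?thesis unfolding Rest_def using NNsum mle by linarith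
  qed
  have dI: "0 < d i \<and> d i \<le> card (cls (U i))" if "i \<in> I" for i
    using dd_pos[of "U i"] seg that unfolding I_def d_def by auto
  have rle: "(\<Sum>i\<in>I. \<rho> i) \<le> ?s"
  proof -
    have "(\<Sum>i\<in>I. \<rho> i) \<le> (\<Sum>i\<in>I. card (cls (U i)))"
    proof (rule sum_mono)
      fix i assume "i \<in> I"
      then show "\<rho> i \<le> card (cls (U i))" using dI[of i] unfolding \<rho>_def
        by (meson le_trans less_imp_le_nat mod_less_divisor)
    qed
    also have "\<dots> \<le> (\<Sum>i<m. card (cls (U i)))" by (rule sum_mono2) (use Isub in auto)
    finally show ?thesis using csum by linarith
  qed
  have "V \<noteq> {}" using xV by blast
  then have "0 < ?s" using finV card_gt_0_iff by blast
  then have s1: "?s \<ge> 1" by simp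
  have Ine: "I \<noteq> {}"
  proof
    assume "I = {}"
    then have "J = Rest" using JR by simp
    moreover have "9 * ?s * ?s + 2 * ?s < 10 * ?s ^ 2 + 3 * ?s" using s1 by (simp add: power2_eq_square)
    ultimately show False using Rle tJ by linarith
  qed
  define DS where "DS = d ` I"
  define n where "n = J' - Rest - (\<Sum>i\<in>I. \<rho> i)"
  have bigJ': "Rest + (\<Sum>i\<in>I. \<rho> i) + ?s * ?s \<le> J'"
    using Rle rle tJ' by (simp add: power2_eq_square)
  have nge: "?s * ?s \<le> n" unfolding n_def using bigJ' by linarith
  have gdvd: "Gcd DS dvd n"
  proof -
    obtain i0 where i0: "i0 \<in> I" using Ine by blast
    have "Gcd DS dvd d i0" unfolding DS_def using i0 by (intro Gcd_dvd) blast
    moreover have "d i0 dvd pp" unfolding d_def using dd_dvd_pp seg i0 unfolding I_def by auto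
    ultimately have "Gcd DS dvd pp" by (rule dvd_trans)
    then have gp: "int (Gcd DS) dvd int pp" by simp
    have "int J mod int pp = int J' mod int pp" using md by (metis of_nat_mod)
    then have "int pp dvd int J' - int J" using mod_eq_dvd_iff by metis
    with gp have g1: "int (Gcd DS) dvd int J' - int J" using dvd_trans by blast
    have g2: "int (Gcd DS) dvd (\<Sum>i\<in>I. int (e i) - int (\<rho> i))"
    proof (rule dvd_sum)
      fix i assume i: "i \<in> I"
      have "Gcd DS dvd d i" unfolding DS_def using i by (intro Gcd_dvd) blast
      moreover have "d i dvd e i - \<rho> i" unfolding \<rho>_def by (simp add: minus_mod_eq_mult_div)
      moreover have "\<rho> i \<le> e i" unfolding \<rho>_def by simp
      ultimately show "int (Gcd DS) dvd int (e i) - int (\<rho> i)"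
        by (metis dvd_trans of_nat_diff int_dvd_int_iff)
    qed
    have "int n = (int J' - int J) + (\<Sum>i\<in>I. int (e i) - int (\<rho> i))"
      unfolding n_def using bigJ' JR by (simp add: sum_subtractf of_nat_diff)
    then have "int (Gcd DS) dvd int n" using g1 g2 by simp
    then show ?thesis by simp
  qed
  have "n \<in> asums DS"
  proof (rule frobenius[OF _ _ _ gdvd nge])
    show "finite DS" unfolding DS_def using finI by simp
    show "DS \<noteq> {}" unfolding DS_def using Ine by simp
    show "\<forall>x\<in>DS. 0 < x \<and> x \<le> ?s" unfolding DS_def using dI cle le_trans by blast
  qed
  then obtain xs where xs: "n = sum_list xs" "set xs \<subseteq> DS" unfolding asums_def by auto
  obtain c where c: "(\<Sum>i\<in>I. d i * c i) = n" using distr[OF finI xs(2)[unfolded DS_def]] xs(1) by auto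
  define L' where "L' i = (if i \<in> I then NN (U i) + \<rho> i + d i * c i else L i)" for i
  have wL': "\<forall>i<m. wk E (U i) (W i) (L' i)"
  proof (intro allI impI)
    fix i assume im: "i < m"
    show "wk E (U i) (W i) (L' i)"
    proof (cases "i \<in> I")
      case False then show ?thesis using seg[OF im] unfolding L'_def by simp
    next
      case True
      have UV: "U i \<in> V" and wi: "wk E (U i) (W i) (L i)" and ev: "eqv (U i) (W i)" using seg[OF im] by auto
      have cy: "cyc (U i)" and NL: "NN (U i) \<le> L i" using True unfolding I_def by auto
      have WV: "W i \<in> V" using wk_V[OF UV wi] .
      have Wc: "W i \<in> cls (U i)" using WV ev unfolding cls_def by simp
      have Le: "L i = NN (U i) + e i" using NL unfolding e_def by simp
      have "L' i mod d i = (NN (U i) + \<rho> i) mod d i" unfolding L'_def using True by simp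
      also have "\<dots> = (NN (U i) + e i) mod d i" unfolding \<rho>_def by (simp add: mod_add_right_eq)
      finally have "L' i mod dd (U i) = L i mod dd (U i)" using Le unfolding d_def by simp
      moreover have "L' i \<ge> NN (U i)" unfolding L'_def using True by simp
      ultimately show ?thesis using G3[OF UV cy Wc wi] by blast
    qed
  qed
  have "(\<Sum>i<m. L' i) = (\<Sum>i\<in>{..<m} - I. L' i) + (\<Sum>i\<in>I. L' i)"
    using sum.subset_diff[OF Isub] by simp
  also have "(\<Sum>i\<in>{..<m} - I. L' i) = (\<Sum>i\<in>{..<m} - I. L i)"
    by (rule sum.cong) (auto simp: L'_def)
  also have "(\<Sum>i\<in>I. L' i) = (\<Sum>i\<in>I. NN (U i)) + (\<Sum>i\<in>I. \<rho> i) + (\<Sum>i\<in>I. d i * c i)"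
    unfolding sum.distrib[symmetric] by (rule sum.cong) (auto simp: L'_def)
  finally have "(\<Sum>i<m. L' i) + (m - 1) = J'"
    using c bigJ' unfolding n_def Rest_def by linarith
  moreover have "wk E (U 0) (W (m - 1)) ((\<Sum>i<m. L' i) + (m - 1))"
    using rebuild[OF m0 wL' edge] .
  ultimately show ?thesis using U0 Wk by simp
qed

end

definition img :: "('v \<Rightarrow> 'v set) \<Rightarrow> 'v set \<Rightarrow> 'v set" where
  "img E Z = (\<Union>q\<in>Z. E q)"

lemma img_pow: "((img E) ^^ k) Y = {z. \<exists>y\<in>Y. wk E y z k}"
proof (induction k)
  case 0 then show ?case by simp
next
  case (Suc k)
  have "((img E) ^^ Suc k) Y = img E ((img E ^^ k) Y)" by simp
  also have "\<dots> = {z. \<exists>y\<in>Y. wk E y z (Suc k)}"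
    unfolding Suc img_def wk_Suc by blast
  finally show ?case .
qed

lemma len_le_sum: "\<forall>p\<in>set ps. (p::nat) \<ge> 1 \<Longrightarrow> length ps \<le> sum_list ps"
  by (induction ps) auto

lemma landau_fin: fixes m :: nat shows "finite {Lcm (set ps) | ps. ps \<noteq> [] \<and> (\<forall>p\<in>set ps. p \<ge> 1) \<and> sum_list ps \<le> m}"
proof -
  have "{Lcm (set ps) | ps. ps \<noteq> [] \<and> (\<forall>p\<in>set ps. p \<ge> 1) \<and> sum_list ps \<le> m}
        \<subseteq> (\<lambda>ps. Lcm (set ps)) ` {ps. set ps \<subseteq> {0..m} \<and> length ps \<le> m}"
  proof
    fix x assume "x \<in> {Lcm (set ps) | ps. ps \<noteq> [] \<and> (\<forall>p\<in>set ps. p \<ge> 1) \<and> sum_list ps \<le> m}"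
    then obtain ps where ps: "x = Lcm (set ps)" "\<forall>p\<in>set ps. p \<ge> 1" "sum_list ps \<le> m" by blast
    have "set ps \<subseteq> {0..m}" using ps(3) member_le_sum_list[of _ ps] by fastforce
    moreover have "length ps \<le> m" using len_le_sum[OF ps(2)] ps(3) by simp
    ultimately show "x \<in> (\<lambda>ps. Lcm (set ps)) ` {ps. set ps \<subseteq> {0..m} \<and> length ps \<le> m}" using ps(1) by blast
  qed
  moreover have "finite {ps. set ps \<subseteq> {0..m} \<and> length ps \<le> (m::nat)}" by (rule finite_lists_length_le) simp
  ultimately show ?thesis using finite_subset by blast
qed

lemma landau_ge1: "landau m \<ge> 1"
  unfolding landau_def using landau_fin[of m] by (intro Max_ge) auto

lemma landau_ge:
  fixes ps :: "nat list"
  assumes "ps \<noteq> []" "\<forall>p\<in>set ps. p \<ge> 1" "sum_list ps \<le> m"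
  shows "Lcm (set ps) \<le> landau m"
  unfolding landau_def using landau_fin[of m] assms by (intro Max_ge) auto

context dg begin

lemma orbit_period:
  assumes "Y \<subseteq> V" "j \<ge> 10 * card V ^ 2 + 3 * card V"
  shows "((img E) ^^ (j + pp)) Y = ((img E) ^^ j) Y"
proof -
  have "wk E y z (j + pp) \<longleftrightarrow> wk E y z j" if "y \<in> Y" for y z
  proof
    assume "wk E y z (j + pp)"
    then show "wk E y z j" using period[of y z "j + pp" j] assms that by auto
  next
    assume "wk E y z j"
    then show "wk E y z (j + pp)" using period[of y z j "j + pp"] assms that by auto
  qed
  then show ?thesis unfolding img_pow by blast
qed

lemma orbit_card:
  assumes "Y \<subseteq> V"
  shows "card (range (\<lambda>k. ((img E) ^^ k) Y)) \<le> 10 * card V ^ 2 + 3 * card V + pp"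
proof -
  let ?t = "10 * card V ^ 2 + 3 * card V"
  let ?f = "\<lambda>k. ((img E) ^^ k) Y"
  have "\<exists>k'<?t + pp. ?f k = ?f k'" for k
  proof (induction k rule: less_induct)
    case (less k)
    show ?case
    proof (cases "k < ?t + pp")
      case True then show ?thesis by blast
    next
      case False
      then have k: "k = (k - pp) + pp" "k - pp \<ge> ?t" "k - pp < k" using pp_pos by auto
      have "?f k = ?f (k - pp)" using orbit_period[OF assms k(2)] k(1) by metis
      then show ?thesis using less.IH[OF k(3)] by metis
    qed
  qed
  then have "range ?f \<subseteq> ?f ` {..<?t + pp}" by blast
  then have "card (range ?f) \<le> card (?f ` {..<?t + pp})" by (intro card_mono) auto
  also have "\<dots> \<le> ?t + pp" using card_image_le[of "{..<?t + pp}" ?f] by simp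
  finally show ?thesis .
qed

lemma pp_le: "pp \<le> landau (card V)"
proof -
  define Cls where "Cls = cls ` {u\<in>V. cyc u}"
  define rep where "rep K = (SOME u. u \<in> V \<and> cyc u \<and> cls u = K)" for K
  have rep: "rep K \<in> V \<and> cyc (rep K) \<and> cls (rep K) = K" if "K \<in> Cls" for K
  proof -
    have "\<exists>u. u \<in> V \<and> cyc u \<and> cls u = K" using that unfolding Cls_def by blast
    then show ?thesis unfolding rep_def by (rule someI_ex)
  qed
  have img_eq: "dd ` {u\<in>V. cyc u} = (\<lambda>K. dd (rep K)) ` Cls"
  proof
    show "dd ` {u\<in>V. cyc u} \<subseteq> (\<lambda>K. dd (rep K)) ` Cls"
    proof
      fix x assume "x \<in> dd ` {u\<in>V. cyc u}"
      then obtain u where u: "u \<in> V" "cyc u" "x = dd u" by blast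
      have K: "cls u \<in> Cls" unfolding Cls_def using u by blast
      have "rep (cls u) \<in> cls u" using rep[OF K] cls_self by metis
      then have "dd (rep (cls u)) = dd u" using dd_cls[OF u(1)] by blast
      then show "x \<in> (\<lambda>K. dd (rep K)) ` Cls" using K u(3) by (metis image_eqI)
    qed
    show "(\<lambda>K. dd (rep K)) ` Cls \<subseteq> dd ` {u\<in>V. cyc u}" using rep by blast
  qed
  have finC: "finite Cls" unfolding Cls_def using finV by simp
  have disj: "pairwise disjnt Cls"
  proof (rule pairwiseI)
    fix K1 K2 assume K: "K1 \<in> Cls" "K2 \<in> Cls" "K1 \<noteq> K2"
    show "disjnt K1 K2"
    proof (rule ccontr)
      assume "\<not> disjnt K1 K2"
      then obtain y where y: "y \<in> K1" "y \<in> K2" unfolding disjnt_def by blast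
      obtain u1 u2 where u: "K1 = cls u1" "K2 = cls u2" using K unfolding Cls_def by blast
      have "cls y = cls u1" using cls_eq[of y u1] y(1) u(1) by simp
      moreover have "cls y = cls u2" using cls_eq[of y u2] y(2) u(2) by simp
      ultimately have "cls y = cls u1" "cls y = cls u2" by auto
      then have "cls y = K1" "cls y = K2" using u by auto
      then show False using K(3) by simp
    qed
  qed
  have sumle: "(\<Sum>K\<in>Cls. dd (rep K)) \<le> card V"
  proof -
    have "(\<Sum>K\<in>Cls. dd (rep K)) \<le> (\<Sum>K\<in>Cls. card K)"
    proof (rule sum_mono)
      fix K assume "K \<in> Cls"
      then show "dd (rep K) \<le> card K" using rep dd_pos(2) by metis
    qed
    also have "\<dots> = card (\<Union>Cls)"
    proof -
      have "\<forall>A\<in>Cls. finite A" unfolding Cls_def using cls_finite by blast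
      then show ?thesis using card_Union_disjoint[OF disj] by simp
    qed
    also have "\<dots> \<le> card V" using cls_sub unfolding Cls_def by (intro card_mono[OF finV]) blast
    finally show ?thesis .
  qed
  obtain ks where ks: "set ks = Cls" "distinct ks" using finite_distinct_list[OF finC] by blast
  define ps where "ps = map (\<lambda>K. dd (rep K)) ks"
  have sps: "set ps = dd ` {u\<in>V. cyc u}" unfolding ps_def img_eq using ks by simp
  have "sum_list ps = (\<Sum>K\<in>Cls. dd (rep K))" unfolding ps_def using ks sum_list_distinct_conv_sum_set by metis
  then have sl: "sum_list ps \<le> card V" using sumle by simp
  have p1: "\<forall>p\<in>set ps. p \<ge> 1" unfolding sps using dd_pos(1) by fastforce
  show ?thesis
  proof (cases "ps = []")
    case True
    then have "dd ` {u\<in>V. cyc u} = {}" using sps by simp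
    then have "pp = 1" unfolding pp_def by (simp only: Lcm_empty)
    then show ?thesis using landau_ge1 by simp
  next
    case False
    then show ?thesis using landau_ge[OF False p1 sl] unfolding pp_def sps by simp
  qed
qed

lemma orbit_bound:
  assumes "Y \<subseteq> V"
  shows "card (range (\<lambda>k. ((img E) ^^ k) Y)) \<le> landau (card V) + 13 * card V ^ 2"
proof -
  have "3 * card V \<le> 3 * card V ^ 2" by (simp add: power2_eq_square)
  then show ?thesis using orbit_card[OF assms] pp_le by linarith
qed

end

definition Dl :: "('q \<Rightarrow> 'a \<Rightarrow> 'q set) \<Rightarrow> 'q set \<Rightarrow> 'a \<Rightarrow> 'q set" where
  "Dl \<delta> Z a = (\<Union>q\<in>Z. \<delta> q a)"

lemma delta_word_snoc: "delta_word \<delta> S (w @ [a]) = Dl \<delta> (delta_word \<delta> S w) a"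
  unfolding delta_word_def Dl_def by simp

lemma delta_word_Nil: "delta_word \<delta> S [] = S"
  unfolding delta_word_def by simp

lemma dw_sub:
  assumes "is_nfa \<Sigma> Q Q0 \<delta> F"
  shows "set w \<subseteq> \<Sigma> \<Longrightarrow> delta_word \<delta> Q0 w \<subseteq> Q"
proof (induction w rule: rev_induct)
  case Nil then show ?case using assms unfolding is_nfa_def by (simp add: delta_word_Nil)
next
  case (snoc a w)
  then have "delta_word \<delta> Q0 w \<subseteq> Q" "a \<in> \<Sigma>" by auto
  then show ?case using assms unfolding is_nfa_def delta_word_snoc Dl_def by blast
qed

lemma dfa_of_R:
  fixes \<Sigma> :: "'a set" and Q Q0 F :: "'q set" and \<delta> :: "'q \<Rightarrow> 'a \<Rightarrow> 'q set"
  assumes nfa: "is_nfa \<Sigma> Q Q0 \<delta> F"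
  defines "R \<equiv> {delta_word \<delta> Q0 w | w. set w \<subseteq> \<Sigma>}"
  shows "\<exists>(Q'::nat set) Q0' \<delta>' F'. is_dfa \<Sigma> Q' Q0' \<delta>' F' \<and>
        nfa_lang \<Sigma> Q0' \<delta>' F' = nfa_lang \<Sigma> Q0 \<delta> F \<and> card Q' = card R"
proof -
  have RQ: "R \<subseteq> Pow Q" unfolding R_def using dw_sub[OF nfa] by blast
  have finQ: "finite Q" using nfa unfolding is_nfa_def by simp
  have finR: "finite R" using RQ finQ finite_subset by blast
  obtain h where h: "bij_betw h R {0..<card R}" using ex_bij_betw_finite_nat[OF finR] by blast
  define g where "g = inv_into R h"
  have gh: "g (h X) = X" if "X \<in> R" for X
    unfolding g_def using h that by (simp add: bij_betw_def inv_into_f_f)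
  have gR: "g i \<in> R" if "i \<in> {0..<card R}" for i
    using bij_betw_inv_into[OF h] that unfolding g_def bij_betw_def by blast
  have hR: "h X \<in> {0..<card R}" if "X \<in> R" for X using h that unfolding bij_betw_def by blast
  have Q0R: "Q0 \<in> R" unfolding R_def by (rule CollectI, rule exI[of _ "[]"]) (simp add: delta_word_Nil)
  have DR: "Dl \<delta> X a \<in> R" if XA: "X \<in> R" "a \<in> \<Sigma>" for X a
  proof -
    obtain w where w: "X = delta_word \<delta> Q0 w" "set w \<subseteq> \<Sigma>" using XA(1) unfolding R_def by blast
    then have "Dl \<delta> X a = delta_word \<delta> Q0 (w @ [a])" "set (w @ [a]) \<subseteq> \<Sigma>" using XA(2) by (auto simp: delta_word_snoc)
    then show ?thesis unfolding R_def by blast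
  qed
  define Q' where "Q' = {0..<card R}"
  define Q0' where "Q0' = {h Q0}"
  define \<delta>' where "\<delta>' i a = {h (Dl \<delta> (g i) a)}" for i a
  define F' where "F' = {i\<in>Q'. g i \<inter> F \<noteq> {}}"
  have dfa: "is_dfa \<Sigma> Q' Q0' \<delta>' F'"
    unfolding is_dfa_def is_nfa_def
  proof (intro conjI ballI)
    show "finite \<Sigma>" using nfa unfolding is_nfa_def by simp
    show "finite Q'" unfolding Q'_def by simp
    show "Q0' \<subseteq> Q'" unfolding Q0'_def Q'_def using hR[OF Q0R] by simp
    show "F' \<subseteq> Q'" unfolding F'_def by blast
    show "card Q0' = 1" unfolding Q0'_def by simp
  next
    fix q a assume "q \<in> Q'" "a \<in> \<Sigma>"
    then show "\<delta>' q a \<subseteq> Q'" unfolding \<delta>'_def Q'_def using hR DR gR by blast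
  next
    fix q a assume "q \<in> Q'" "a \<in> \<Sigma>"
    show "card (\<delta>' q a) = 1" unfolding \<delta>'_def by simp
  qed
  have dw': "set w \<subseteq> \<Sigma> \<Longrightarrow> delta_word \<delta>' Q0' w = {h (delta_word \<delta> Q0 w)}" for w
  proof (induction w rule: rev_induct)
    case Nil then show ?case unfolding Q0'_def by (simp add: delta_word_Nil)
  next
    case (snoc a w)
    then have IH: "delta_word \<delta>' Q0' w = {h (delta_word \<delta> Q0 w)}" and a: "a \<in> \<Sigma>" by auto
    have XR: "delta_word \<delta> Q0 w \<in> R" unfolding R_def using snoc.prems by auto
    have "delta_word \<delta>' Q0' (w @ [a]) = \<delta>' (h (delta_word \<delta> Q0 w)) a"
      unfolding delta_word_snoc IH Dl_def by simp
    also have "\<dots> = {h (Dl \<delta> (delta_word \<delta> Q0 w) a)}" unfolding \<delta>'_def using gh[OF XR] by simp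
    finally show ?case unfolding delta_word_snoc .
  qed
  have lang: "nfa_lang \<Sigma> Q0' \<delta>' F' = nfa_lang \<Sigma> Q0 \<delta> F"
  proof (rule set_eqI)
    fix w
    show "w \<in> nfa_lang \<Sigma> Q0' \<delta>' F' \<longleftrightarrow> w \<in> nfa_lang \<Sigma> Q0 \<delta> F"
    proof (cases "set w \<subseteq> \<Sigma>")
      case True
      let ?X = "delta_word \<delta> Q0 w"
      have XR: "?X \<in> R" unfolding R_def using True by auto
      have "w \<in> nfa_lang \<Sigma> Q0' \<delta>' F' \<longleftrightarrow> h ?X \<in> F'"
        using True by (simp add: nfa_lang_def dw'[OF True])
      also have "\<dots> \<longleftrightarrow> ?X \<inter> F \<noteq> {}" unfolding F'_def Q'_def using hR[OF XR] gh[OF XR] by simp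
      also have "\<dots> \<longleftrightarrow> w \<in> nfa_lang \<Sigma> Q0 \<delta> F" unfolding nfa_lang_def using True by simp
      finally show ?thesis .
    next
      case False then show ?thesis unfolding nfa_lang_def by simp
    qed
  qed
  show ?thesis using dfa lang unfolding Q'_def by (intro exI[of _ Q'] exI[of _ Q0'] exI[of _ \<delta>'] exI[of _ F']) (simp add: Q'_def)
qed


lemma card_ins: "finite A \<Longrightarrow> card (insert x A) \<le> Suc (card A)"
  by (simp add: card_insert_if)

lemma card_R_bound:
  fixes \<Sigma> :: "'a set" and Q Q0 F :: "'q set" and \<delta> :: "'q \<Rightarrow> 'a \<Rightarrow> 'q set"
  assumes nfa: "is_nfa \<Sigma> Q Q0 \<delta> F" and ne: "\<Sigma> \<noteq> {}" and rl: "remembers_last \<Sigma> Q \<delta>"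
  defines "R \<equiv> {delta_word \<delta> Q0 w | w. set w \<subseteq> \<Sigma>}"
    and "n1 \<equiv> Max ((\<lambda>a. card (reach_by Q \<delta> a)) ` \<Sigma>)"
  shows "card R \<le> 2 ^ (card Q - n1) * (landau n1 + 15 * n1 ^ 2)"
proof -
  obtain P where P: "Q = (\<Union>a\<in>\<Sigma>. P a)" "\<forall>a\<in>\<Sigma>. \<forall>b\<in>\<Sigma>. a \<noteq> b \<longrightarrow> P a \<inter> P b = {}"
    "\<forall>q\<in>Q. \<forall>a\<in>\<Sigma>. \<delta> q a \<subseteq> P a" using rl unfolding remembers_last_def by blast
  have finS: "finite \<Sigma>" and finQ: "finite Q" and Q0Q: "Q0 \<subseteq> Q" and dQ: "\<forall>q\<in>Q. \<forall>a\<in>\<Sigma>. \<delta> q a \<subseteq> Q"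
    using nfa unfolding is_nfa_def by auto
  define QA where "QA a = reach_by Q \<delta> a" for a
  have QAQ: "QA a \<subseteq> Q" if "a \<in> \<Sigma>" for a using dQ that unfolding QA_def reach_by_def by blast
  have QAP: "QA a \<subseteq> P a" if "a \<in> \<Sigma>" for a using P(3) that unfolding QA_def reach_by_def by blast
  have finQA: "finite (QA a)" if "a \<in> \<Sigma>" for a using QAQ[OF that] finQ finite_subset by blast
  have DlQA: "Dl \<delta> Z a \<subseteq> QA a" if "Z \<subseteq> Q" for Z a using that unfolding Dl_def QA_def reach_by_def by blast
  have "n1 \<in> (\<lambda>a. card (QA a)) ` \<Sigma>" unfolding n1_def QA_def using finS ne by (intro Max_in) auto
  then obtain a0 where a0: "a0 \<in> \<Sigma>" "card (QA a0) = n1" by blast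
  have le: "card (QA b) \<le> n1" if "b \<in> \<Sigma>" for b unfolding n1_def QA_def using finS that by (intro Max_ge) auto
  have dwQ: "delta_word \<delta> Q0 w \<subseteq> Q" if "set w \<subseteq> \<Sigma>" for w using dw_sub[OF nfa that] .
  have l1: "landau n1 \<ge> 1" by (rule landau_ge1)
  show ?thesis
  proof (cases "n1 = 0")
    case True
    have QAe: "QA b = {}" if "b \<in> \<Sigma>" for b using le[OF that] True finQA[OF that] by simp
    have "R \<subseteq> {Q0, {}}"
    proof
      fix X assume "X \<in> R"
      then obtain w where w: "X = delta_word \<delta> Q0 w" "set w \<subseteq> \<Sigma>" unfolding R_def by blast
      show "X \<in> {Q0, {}}"
      proof (cases w rule: rev_exhaust)
        case Nil then show ?thesis using w by (simp add: delta_word_Nil)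
      next
        case (snoc ys b)
        then have "X = Dl \<delta> (delta_word \<delta> Q0 ys) b" "b \<in> \<Sigma>" "set ys \<subseteq> \<Sigma>" using w by (auto simp: delta_word_snoc)
        then have "X \<subseteq> QA b" using DlQA dwQ by blast
        then show ?thesis using QAe \<open>b \<in> \<Sigma>\<close> by auto
      qed
    qed
    then have cR: "card R \<le> card {Q0, {}}" by (intro card_mono) auto
    show ?thesis
    proof (cases "Q = {}")
      case True
      then have "card R \<le> 1" using cR Q0Q by simp
      then show ?thesis using l1 True \<open>n1 = 0\<close> by simp
    next
      case False
      then have "0 < card Q" using finQ by (simp add: card_gt_0_iff)
      then have "(2::nat) ^ 1 \<le> 2 ^ card Q" by (intro power_increasing) auto
      then have "(2::nat) \<le> 2 ^ card Q" by simp
      moreover have "card {Q0, {}} \<le> 2" by (simp add: card_insert_le_m1)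
      ultimately have "card R \<le> 2 ^ card Q * 1" using cR by simp
      also have "\<dots> \<le> 2 ^ card Q * landau 0" using l1 True by (intro mult_left_mono) auto
      finally show ?thesis using \<open>n1 = 0\<close> by simp
    qed
  next
    case False
    then have n1pos: "n1 \<ge> 1" by simp
    define U where "U = Q - QA a0"
    define m where "m = card Q - n1"
    have cU: "card U = m" unfolding U_def m_def using card_Diff_subset[OF finQA[OF a0(1)] QAQ[OF a0(1)]] a0(2) by simp
    have finU: "finite U" unfolding U_def using finQ by simp
    define f where "f q = \<delta> q a0" for q
    interpret G: dg "QA a0" f
    proof
      show "finite (QA a0)" using finQA[OF a0(1)] .
      show "\<forall>v\<in>QA a0. f v \<subseteq> QA a0" unfolding f_def using QAQ[OF a0(1)] unfolding QA_def reach_by_def by blast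
    qed
    have Dimg: "Dl \<delta> Z a0 = img f Z" for Z unfolding Dl_def img_def f_def by simp
    define Orb where "Orb X = range (\<lambda>k. ((img f) ^^ k) (Dl \<delta> X a0))" for X
    define H where "H = landau n1 + 13 * n1 ^ 2"
    have OrbB: "card (Orb X) \<le> H" if "X \<subseteq> Q" for X
      unfolding Orb_def H_def using G.orbit_bound[OF DlQA[OF that]] a0(2) by simp
    have OrbS: "Orb X \<subseteq> Pow (QA a0)" if "X \<subseteq> Q" for X
    proof
      fix Z assume "Z \<in> Orb X"
      then obtain k where k: "Z = ((img f) ^^ k) (Dl \<delta> X a0)" unfolding Orb_def by blast
      show "Z \<in> Pow (QA a0)" unfolding k img_pow using G.wk_V DlQA[OF that] by blast
    qed
    define A where "A = insert Q0 (Pow U - {{}})"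
    have AQ: "X \<subseteq> Q" if "X \<in> A" for X using that Q0Q unfolding A_def U_def by blast
    have finA: "finite A" unfolding A_def using finU by simp
    have cA: "card A \<le> 2 ^ m"
    proof -
      have "card (Pow U - {{}}) = 2 ^ m - 1" using card_Pow[of U] cU finU by (simp add: card_Diff_singleton)
      moreover have "card A \<le> Suc (card (Pow U - {{}}))" unfolding A_def by (rule card_ins) (use finU in simp)
      moreover have "(1::nat) \<le> 2 ^ m" by simp
      ultimately show ?thesis by linarith
    qed
    define RHS where "RHS = insert Q0 (Pow U \<union> (\<Union>X\<in>A. Orb X))"
    have inR: "set w \<subseteq> \<Sigma> \<Longrightarrow> delta_word \<delta> Q0 w \<in> RHS" for w
    proof (induction w rule: rev_induct)
      case Nil then show ?case unfolding RHS_def by (simp add: delta_word_Nil)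
    next
      case (snoc b w)
      then have IH: "delta_word \<delta> Q0 w \<in> RHS" and b: "b \<in> \<Sigma>" and ws: "set w \<subseteq> \<Sigma>" by auto
      define Z where "Z = delta_word \<delta> Q0 w"
      have ZQ: "Z \<subseteq> Q" unfolding Z_def using dwQ[OF ws] .
      have goal: "Dl \<delta> Z b \<in> RHS"
      proof (cases "b = a0")
        case False
        have "QA b \<inter> QA a0 = {}" using QAP[OF b] QAP[OF a0(1)] P(2) b a0(1) False by blast
        then have "Dl \<delta> Z b \<subseteq> U" unfolding U_def using DlQA[OF ZQ, of b] QAQ[OF b] by blast
        then show ?thesis unfolding RHS_def by blast
      next
        case True
        have Z: "Z = Q0 \<or> Z \<in> Pow U \<or> (\<exists>X\<in>A. Z \<in> Orb X)" using IH unfolding RHS_def Z_def by blast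
        have k0: "Dl \<delta> X a0 \<in> Orb X" for X unfolding Orb_def
          by (rule range_eqI[of _ _ 0]) simp
        show ?thesis
        proof (cases "Z = Q0")
          case True
          then show ?thesis using k0[of Q0] \<open>b = a0\<close> unfolding RHS_def A_def by blast
        next
          case ZQ0: False
          show ?thesis
          proof (cases "Z \<in> Pow U")
            case True
            show ?thesis
            proof (cases "Z = {}")
              case True then have "Dl \<delta> Z b = {}" unfolding Dl_def by simp
              then show ?thesis unfolding RHS_def by blast
            next
              case False
              then have "Z \<in> A" using \<open>Z \<in> Pow U\<close> unfolding A_def by blast
              then show ?thesis using k0[of Z] \<open>b = a0\<close> unfolding RHS_def by blast
            qed
          next
            case False
            then obtain X where X: "X \<in> A" "Z \<in> Orb X" using Z ZQ0 by blast
            then obtain k where k: "Z = ((img f) ^^ k) (Dl \<delta> X a0)" unfolding Orb_def by blast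
            have "Dl \<delta> Z b = ((img f) ^^ Suc k) (Dl \<delta> X a0)" unfolding \<open>b = a0\<close> Dimg k by simp
            then have "Dl \<delta> Z b \<in> Orb X" unfolding Orb_def by (metis rangeI)
            then show ?thesis using X(1) unfolding RHS_def by blast
          qed
        qed
      qed
      then show ?case unfolding Z_def delta_word_snoc .
    qed
    have RR: "R \<subseteq> RHS" unfolding R_def using inR by blast
    have finRHS: "finite RHS"
    proof -
      have "(\<Union>X\<in>A. Orb X) \<subseteq> Pow (QA a0)" using OrbS AQ by blast
      then have "finite (\<Union>X\<in>A. Orb X)" using finQA[OF a0(1)] finite_subset by blast
      then show ?thesis unfolding RHS_def using finU by simp
    qed
    have "card R \<le> card RHS" using card_mono[OF finRHS RR] .
    also have "\<dots> \<le> Suc (card (Pow U \<union> (\<Union>X\<in>A. Orb X)))" unfolding RHS_def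
      by (rule card_ins) (use finRHS in \<open>simp add: RHS_def\<close>)
    also have "\<dots> \<le> Suc (card (Pow U) + card (\<Union>X\<in>A. Orb X))" using card_Un_le by simp
    also have "card (\<Union>X\<in>A. Orb X) \<le> (\<Sum>X\<in>A. card (Orb X))" using card_UN_le[OF finA] .
    also have "(\<Sum>X\<in>A. card (Orb X)) \<le> card A * H"
      using sum_bounded_above[of A "\<lambda>X. card (Orb X)" H] OrbB AQ by simp
    also have "card A * H \<le> 2 ^ m * H" using cA by (rule mult_right_mono) simp
    finally have cR: "card R \<le> 1 + 2 ^ m + 2 ^ m * H" using card_Pow[of U] cU finU by simp
    have "1 + 2 ^ m \<le> 2 ^ m * (2 * n1 ^ 2)"
    proof -
      have "n1 ^ 2 \<ge> 1" using n1pos by simp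
      then have "2 ^ m * 2 \<le> 2 ^ m * (2 * n1 ^ 2)" by (intro mult_left_mono) auto
      moreover have "(1::nat) \<le> 2 ^ m" by simp
      ultimately show ?thesis by linarith
    qed
    then have "card R \<le> 2 ^ m * (H + 2 * n1 ^ 2)" using cR by (simp add: distrib_left)
    then show ?thesis unfolding H_def m_def by (simp add: add.commute)
  qed
qed

theorem lemma4:
  shows "\<exists>C::real. \<forall>(\<Sigma>::nat set) (Q::nat set) Q0 \<delta> F.
    is_nfa \<Sigma> Q Q0 \<delta> F \<longrightarrow> \<Sigma> \<noteq> {} \<longrightarrow> remembers_last \<Sigma> Q \<delta> \<longrightarrow>
    (let n = card Q; n1 = Max ((\<lambda>a. card (reach_by Q \<delta> a)) ` \<Sigma>) in
      \<exists>(Q'::nat set) Q0' \<delta>' F'. is_dfa \<Sigma> Q' Q0' \<delta>' F' \<and>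
        nfa_lang \<Sigma> Q0' \<delta>' F' = nfa_lang \<Sigma> Q0 \<delta> F \<and>
        real (card Q') \<le> 2 ^ (n - n1) * (real (landau n1) + C * real n1 ^ 2))"
proof (intro exI[of _ "15::real"] allI impI)
  fix \<Sigma> Q Q0 :: "nat set" and \<delta> :: "nat \<Rightarrow> nat \<Rightarrow> nat set" and F :: "nat set"
  assume nfa: "is_nfa \<Sigma> Q Q0 \<delta> F" and ne: "\<Sigma> \<noteq> {}" and rl: "remembers_last \<Sigma> Q \<delta>"
  let ?R = "{delta_word \<delta> Q0 w | w. set w \<subseteq> \<Sigma>}"
  let ?n1 = "Max ((\<lambda>a. card (reach_by Q \<delta> a)) ` \<Sigma>)"
  obtain Q' Q0' \<delta>' F' where D: "is_dfa \<Sigma> (Q'::nat set) Q0' \<delta>' F'"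
    "nfa_lang \<Sigma> Q0' \<delta>' F' = nfa_lang \<Sigma> Q0 \<delta> F" "card Q' = card ?R"
    using dfa_of_R[OF nfa] by (elim exE conjE) (rule that)
  have B: "card ?R \<le> 2 ^ (card Q - ?n1) * (landau ?n1 + 15 * ?n1 ^ 2)"
    using card_R_bound[OF nfa ne rl] by simp
  have "real (card Q') \<le> real (2 ^ (card Q - ?n1) * (landau ?n1 + 15 * ?n1 ^ 2))"
    using B D(3) by (simp only: of_nat_le_iff)
  also have "\<dots> = 2 ^ (card Q - ?n1) * (real (landau ?n1) + 15 * real ?n1 ^ 2)" by simp
  finally show "let n = card Q; n1 = ?n1 in
      \<exists>(Q'::nat set) Q0' \<delta>' F'. is_dfa \<Sigma> Q' Q0' \<delta>' F' \<and>
        nfa_lang \<Sigma> Q0' \<delta>' F' = nfa_lang \<Sigma> Q0 \<delta> F \<and>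
        real (card Q') \<le> 2 ^ (n - n1) * (real (landau n1) + 15 * real n1 ^ 2)"
    unfolding Let_def by (intro exI[of _ Q'] exI[of _ Q0'] exI[of _ \<delta>'] exI[of _ F'] conjI D(1) D(2))
qed

end
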